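(* Let $\phi(\zeta,t)=-q_t+d_t\zeta+\int_0^\infty(e^{-\zeta x}-1)\pi_t(\mathrm dx)$ for $\zeta\in\mathbb H$ and a.e. $t\ge0$, where $q_t\ge0$, $d_t\in\mathbb R$, $\pi_t$ are nonnegative Borel measures on $(0,\infty)$, $t\mapsto q_t$ and $t\mapsto d_t$ are in $L^1_{\rm loc}$, and $\min\{x,1\}\pi_t(\mathrm dx)$ is locally integrable in $t$. Let $(v_{s,t})$ be the absolutely continuous reverse evolution family (contained in $\mathcal{BF}$) with Herglotz vector field $\phi$, and let $(Z_t)$ be the associated branching process. Then $\mathbb P^{(s,x)}[T_0^s<\infty]=0$ for every $x>0$ and $s\ge0$.
   Context: $\mathbb H=\{\operatorname{Re}\zeta>0\}$, $\Delta=\{(s,t):0\le s\le t\}$; $L^1_{\rm loc}$: integrable on compact subintervals of $[0,\infty)$. A family of nonnegative measures $(\rho_t)$ is locally integrable in $t$ if $t\mapsto\rho_t(B)$ is measurable for all Borel $B$ and $t\mapsto\rho_t(\text{total})$ is in $L^1_{\rm loc}$. $\mathcal{BF}$: Bernstein functions not identically zero, extended to $\mathbb H$. The absolutely continuous reverse evolution family $(v_{s,t})$ with Herglotz vector field $\phi$ is defined by: $s\mapsto v_{s,t}(\zeta)$ is the unique solution of $\frac{\mathrm d}{\mathrm ds}v(s)=\phi(v(s),s)$ a.e. on $[0,t]$, $v(t)=\zeta$. The associated branching process $(Z_t)$ on $[0,\infty]$ is a Markov family with probabilities $\mathbb P^{(s,x)}$ whose transition kernels $k_{s,t}$ (with $k_{s,t}(0,\cdot)=\delta_0$,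 $k_{s,t}(\infty,\cdot)=\delta_\infty$) satisfy $\int_{[0,\infty)}e^{-\theta y}k_{s,t}(x,\mathrm dy)=e^{-xv_{s,t}(\theta)}$, realized with sample paths in $D[0,\infty)$ (càdlàg paths into $[0,\infty]$ absorbed at $0$ and at $\infty$ once they or their left limits reach these points). $T_0^s=\inf\{t\ge s:Z_t=0\}$. *)

theory Defs
  imports "HOL-Probability.Probability"
begin

section \<open>Absolute continuity of functions on a compact interval\<close>

definition abs_continuous_on :: "real \<Rightarrow> real \<Rightarrow> (real \<Rightarrow> 'a::real_normed_vector) \<Rightarrow> bool" where
  "abs_continuous_on lo hi f \<longleftrightarrow>
     (\<forall>\<epsilon>>0. \<exists>\<delta>>0. \<forall>(n::nat) (a::nat \<Rightarrow> real) (b::nat \<Rightarrow> real).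
        (\<forall>i<n. lo \<le> a i \<and> a i \<le> b i \<and> b i \<le> hi) \<and>
        (\<forall>i<n. \<forall>j<n. i \<noteq> j \<longrightarrow> b i \<le> a j \<or> b j \<le> a i) \<and>
        (\<Sum>i<n. b i - a i) < \<delta>
        \<longrightarrow> (\<Sum>i<n. norm (f (b i) - f (a i))) < \<epsilon>)"

section \<open>Right half plane and Herglotz vector field\<close>

definition right_half_plane :: "complex set" where
  "right_half_plane = {\<zeta>. Re \<zeta> > 0}"

text \<open>phi(zeta,t) = -q_t + d_t zeta + integral over (0,infinity) of (exp(-zeta x) - 1) pi_t(dx).\<close>
definition herglotz_phi ::
  "(real \<Rightarrow> real) \<Rightarrow> (real \<Rightarrow> real) \<Rightarrow> (real \<Rightarrow> real measure) \<Rightarrow> complex \<Rightarrow> real \<Rightarrow> complex" where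
  "herglotz_phi q d \<pi> \<zeta> t =
     - complex_of_real (q t) + complex_of_real (d t) * \<zeta>
     + set_lebesgue_integral (\<pi> t) {0<..} (\<lambda>x. exp (- \<zeta> * complex_of_real x) - 1)"

text \<open>Locally integrable family of nonnegative measures (indexed by t in [0,infinity)).\<close>
definition loc_integrable_family :: "(real \<Rightarrow> real measure) \<Rightarrow> bool" where
  "loc_integrable_family \<rho> \<longleftrightarrow>
     (\<forall>B \<in> sets borel. (\<lambda>t. emeasure (\<rho> t) B) \<in> borel_measurable (restrict_space lborel {0..})) \<and>
     (\<forall>T\<ge>0. (\<integral>\<^sup>+ t \<in> {0..T}. emeasure (\<rho> t) UNIV \<partial>lborel) < \<infinity>)"

text \<open>Absolutely continuous reverse evolution family with Herglotz vector field phi: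
  for t >= 0 and zeta in H, s |-> v s t zeta is an absolutely continuous H-valued solution on [0,t]
  of dv/ds = phi(v(s),s) a.e., with v(t) = zeta (this solution is unique).\<close>
definition reverse_evolution_family ::
  "(complex \<Rightarrow> real \<Rightarrow> complex) \<Rightarrow> (real \<Rightarrow> real \<Rightarrow> complex \<Rightarrow> complex) \<Rightarrow> bool" where
  "reverse_evolution_family \<phi> v \<longleftrightarrow>
     (\<forall>t\<ge>0. \<forall>\<zeta>\<in>right_half_plane.
        v t t \<zeta> = \<zeta> \<and>
        (\<forall>s\<in>{0..t}. v s t \<zeta> \<in> right_half_plane) \<and>
        abs_continuous_on 0 t (\<lambda>s. v s t \<zeta>) \<and>
        (AE s in lborel. s \<in> {0..t} \<longrightarrow>
           ((\<lambda>r. v r t \<zeta>) has_vector_derivative \<phi> (v s t \<zeta>) s) (at s within {0..t})))"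

section \<open>Paths in D[0,infinity) absorbed at 0 and infinity\<close>

definition cadlag_absorbed :: "(real \<Rightarrow> ennreal) \<Rightarrow> bool" where
  "cadlag_absorbed w \<longleftrightarrow>
     (\<forall>t\<ge>0. (w \<longlongrightarrow> w t) (at_right t)) \<and>
     (\<forall>t>0. \<exists>l. (w \<longlongrightarrow> l) (at_left t)) \<and>
     (\<forall>t\<ge>0. \<forall>a\<in>{0, \<infinity>}. (w t = a \<or> (t > 0 \<and> (w \<longlongrightarrow> a) (at_left t)))
            \<longrightarrow> (\<forall>u\<ge>t. w u = a))"

section \<open>Branching process associated with v\<close>

text \<open>Transition kernels k s t x on [0,infinity] with k(0) = delta_0, k(infinity) = delta_infinity and
  Laplace transform exp(-x v_{s,t}(theta)) for finite x > 0 and theta > 0.\<close>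
definition branching_kernels ::
  "(real \<Rightarrow> real \<Rightarrow> complex \<Rightarrow> complex) \<Rightarrow> (real \<Rightarrow> real \<Rightarrow> ennreal \<Rightarrow> ennreal measure) \<Rightarrow> bool" where
  "branching_kernels v k \<longleftrightarrow>
     (\<forall>s t. 0 \<le> s \<and> s \<le> t \<longrightarrow>
        (\<forall>x. prob_space (k s t x) \<and> sets (k s t x) = sets borel) \<and>
        (\<forall>B \<in> sets borel. (\<lambda>x. emeasure (k s t x) B) \<in> borel_measurable borel) \<and>
        k s t 0 = return borel 0 \<and>
        k s t \<infinity> = return borel \<infinity> \<and>
        (\<forall>x. 0 < x \<and> x < \<infinity> \<longrightarrow> (\<forall>\<theta>::real. \<theta> > 0 \<longrightarrow>
           complex_of_real (set_lebesgue_integral (k s t x) {y. y \<noteq> \<infinity>} (\<lambda>y. exp (- \<theta> * enn2real y)))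
           = exp (- complex_of_real (enn2real x) * v s t (complex_of_real \<theta>)))))"

text \<open>Markov family (Z, P) with transition kernels k and sample paths in D[0,infinity):
  P s x is the law of the process started at time s in state x; the Markov property is
  with respect to the natural filtration sigma(Z_u : s <= u <= r).\<close>
definition branching_process ::
  "(real \<Rightarrow> real \<Rightarrow> ennreal \<Rightarrow> ennreal measure) \<Rightarrow> (real \<Rightarrow> ennreal \<Rightarrow> 'w measure)
     \<Rightarrow> (real \<Rightarrow> 'w \<Rightarrow> ennreal) \<Rightarrow> bool" where
  "branching_process k P Z \<longleftrightarrow>
     (\<forall>s\<ge>0. \<forall>x.
        prob_space (P s x) \<and>
        (\<forall>t. Z t \<in> borel_measurable (P s x)) \<and>
        (\<forall>w\<in>space (P s x). cadlag_absorbed (\<lambda>t. Z t w)) \<and>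
        emeasure (P s x) {w \<in> space (P s x). Z s w = x} = 1 \<and>
        (\<forall>r t. s \<le> r \<and> r \<le> t \<longrightarrow> (\<forall>B \<in> sets borel.
           \<forall>A \<in> sigma_sets (space (P s x)) (\<Union>u\<in>{s..r}. {Z u -` C \<inter> space (P s x) | C. C \<in> sets borel}).
             measure (P s x) (A \<inter> {w \<in> space (P s x). Z t w \<in> B})
             = set_lebesgue_integral (P s x) A (\<lambda>w. measure (k r t (Z r w)) B))))"

text \<open>Hitting time of 0 after time s (infinity if 0 is never hit).\<close>
definition hit_zero :: "(real \<Rightarrow> 'w \<Rightarrow> ennreal) \<Rightarrow> real \<Rightarrow> 'w \<Rightarrow> ereal" where
  "hit_zero Z s w = Inf (ereal ` {t. s \<le> t \<and> Z t w = 0})"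

end

theory Submission
  imports Defs "HOL-Analysis.Analysis"
begin





lemma lmeasurable_vec1:
  fixes X :: "real set"
  assumes "(vec ` X :: (real^1) set) \<in> lmeasurable"
  shows "X \<in> lmeasurable \<and> measure lebesgue X = measure lebesgue (vec ` X :: (real^1) set)"
proof -
  have i: "(\<lambda>x::real^1. 1::real) integrable_on (vec ` X)"
    using assms lmeasurable_iff_integrable_on by blast
  have eq: "(\<lambda>x. x $ 1) ` (vec ` X :: (real^1) set) = X"
    unfolding image_image by simp
  have "((\<lambda>x::real. 1::real) has_integral integral (vec ` X) (\<lambda>x::real^1. 1::real)) X"
    using has_integral_vec1_I[OF integrable_integral[OF i]] eq by (simp add: o_def)
  then have X: "X \<in> lmeasurable"
    unfolding lmeasurable_iff_integrable_on integrable_on_def by blast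
  have "measure lebesgue X = integral X (\<lambda>x::real. 1::real)"
    by (rule lmeasure_integral[OF X])
  also have "\<dots> = integral (vec ` X) (\<lambda>x::real^1. 1::real)"
    using \<open>((\<lambda>x::real. 1::real) has_integral _) X\<close> by (rule integral_unique)
  also have "\<dots> = measure lebesgue (vec ` X :: (real^1) set)"
    by (rule lmeasure_integral[OF assms, symmetric])
  finally show ?thesis using X by blast
qed

lemma image_measure_1d:
  fixes G G' :: "real \<Rightarrow> real"
  assumes S: "S \<in> sets lebesgue"
    and der: "\<And>x. x \<in> S \<Longrightarrow> (G has_real_derivative G' x) (at x within S)"
    and int: "(\<lambda>x. \<bar>G' x\<bar>) integrable_on S"
  shows "G ` S \<in> lmeasurable \<and> measure lebesgue (G ` S) \<le> integral S (\<lambda>x. \<bar>G' x\<bar>)"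
proof -
  let ?lift = "vec :: real \<Rightarrow> real^1"
  let ?drop = "(\<lambda>x::real^1. x $ 1)"
  define T where "T = ?lift ` S"
  have T: "T \<in> sets lebesgue"
    unfolding T_def
    by (auto intro: differentiable_image_in_sets_lebesgue [OF S] differentiable_vec)
  have "((\<lambda>x. vec (G (x $ 1))) has_derivative (*\<^sub>R) (G' z)) (at (vec z) within ?lift ` S)"
    if "z \<in> S" for z
    using der [OF that]
    by (simp add: has_real_derivative_iff_has_vector_derivative has_vector_derivative_def has_derivative_vector_1)
  then have der': "\<And>x. x \<in> T \<Longrightarrow>
        ((\<lambda>x. ?lift (G (?drop x))) has_derivative (*\<^sub>R) (G' (?drop x))) (at x within T)"
    by (auto simp: T_def)
  have dropT: "?drop ` T = S"
    by (force simp: T_def image_iff)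
  have det1: "det (mat r :: real^1^1) = r" for r
    by (simp add: det_1 mat_def)
  have deteq: "\<bar>det (matrix ((*\<^sub>R) (G' (?drop x))) :: real^1^1)\<bar> = \<bar>G' (?drop x)\<bar>" for x
    unfolding matrix_scaleR det1 ..
  have int': "(\<lambda>x. \<bar>det (matrix ((*\<^sub>R) (G' (?drop x))) :: real^1^1)\<bar>) integrable_on T"
  proof -
    have "((\<lambda>x::real^1. \<bar>G' (?drop x)\<bar>) \<circ> vec) integrable_on (?drop ` T)"
      using int dropT by (simp add: o_def)
    then obtain y where "(((\<lambda>x::real^1. \<bar>G' (?drop x)\<bar>) \<circ> vec) has_integral y) (?drop ` T)"
      by (auto simp: integrable_on_def)
    then have "((\<lambda>x::real^1. \<bar>G' (?drop x)\<bar>) has_integral y) T"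
      by (rule has_integral_vec1_D)
    then show ?thesis
      unfolding deteq by (auto simp: integrable_on_def)
  qed
  have m: "(\<lambda>x. ?lift (G (?drop x))) ` T \<in> lmeasurable"
    and le: "measure lebesgue ((\<lambda>x. ?lift (G (?drop x))) ` T) \<le> integral T (\<lambda>x. \<bar>det (matrix ((*\<^sub>R) (G' (?drop x))) :: real^1^1)\<bar>)"
    using measurable_differentiable_image[OF T der' int'] measure_differentiable_image[OF T der' int'] by auto
  have imgeq: "(\<lambda>x. ?lift (G (?drop x))) ` T = ?lift ` (G ` S)"
    by (force simp: T_def image_iff)
  have inteq: "integral T (\<lambda>x. \<bar>det (matrix ((*\<^sub>R) (G' (?drop x))) :: real^1^1)\<bar>) = integral S (\<lambda>x. \<bar>G' x\<bar>)"
    unfolding deteq integral_vec1_eq[of T] dropT by (simp add: o_def)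
  have "(vec ` (G ` S) :: (real^1) set) \<in> lmeasurable" using m imgeq by simp
  then have A: "G ` S \<in> lmeasurable"
    and B: "measure lebesgue (G ` S) = measure lebesgue (vec ` (G`S) :: (real^1) set)"
    using lmeasurable_vec1 by blast+
  show ?thesis using A B le imgeq inteq by simp
qed


lemma acD:
  fixes G :: "real \<Rightarrow> 'a::real_normed_vector"
  assumes "abs_continuous_on a b G" "e > 0"
  obtains \<delta> where "\<delta> > 0"
    "\<And>(n::nat) (p::nat\<Rightarrow>real) q. (\<And>i. i<n \<Longrightarrow> a \<le> p i \<and> p i \<le> q i \<and> q i \<le> b) \<Longrightarrow>
       (\<And>i j. i<n \<Longrightarrow> j<n \<Longrightarrow> i \<noteq> j \<Longrightarrow> q i \<le> p j \<or> q j \<le> p i) \<Longrightarrow>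
       (\<Sum>i<n. q i - p i) < \<delta> \<Longrightarrow> (\<Sum>i<n. norm (G (q i) - G (p i))) < e"
proof -
  from assms obtain \<delta> where "\<delta> > 0" and H: "\<forall>(n::nat) (p::nat \<Rightarrow> real) (q::nat \<Rightarrow> real).
        (\<forall>i<n. a \<le> p i \<and> p i \<le> q i \<and> q i \<le> b) \<and>
        (\<forall>i<n. \<forall>j<n. i \<noteq> j \<longrightarrow> q i \<le> p j \<or> q j \<le> p i) \<and>
        (\<Sum>i<n. q i - p i) < \<delta>
        \<longrightarrow> (\<Sum>i<n. norm (G (q i) - G (p i))) < e"
    unfolding abs_continuous_on_def by blast
  show ?thesis
  proof (rule that[OF \<open>\<delta> > 0\<close>])
    fix n :: nat and p q :: "nat \<Rightarrow> real"
    assume "\<And>i. i<n \<Longrightarrow> a \<le> p i \<and> p i \<le> q i \<and> q i \<le> b"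
      "\<And>i j. i<n \<Longrightarrow> j<n \<Longrightarrow> i \<noteq> j \<Longrightarrow> q i \<le> p j \<or> q j \<le> p i"
      "(\<Sum>i<n. q i - p i) < \<delta>"
    then show "(\<Sum>i<n. norm (G (q i) - G (p i))) < e"
      using H[rule_format, of n p q] by blast
  qed
qed

lemma ac_continuous:
  fixes G :: "real \<Rightarrow> 'a::real_normed_vector"
  assumes ac: "abs_continuous_on a b G"
  shows "continuous_on {a..b} G"
  unfolding continuous_on_iff
proof (intro ballI allI impI)
  fix x and e :: real assume x: "x \<in> {a..b}" and e: "0 < e"
  show "\<exists>d>0. \<forall>x'\<in>{a..b}. dist x' x < d \<longrightarrow> dist (G x') (G x) < e"
  proof (rule acD[OF ac e])
  fix \<delta> assume \<delta>: "\<delta> > 0" and H: "\<And>(n::nat) (p::nat\<Rightarrow>real) q. (\<And>i. i<n \<Longrightarrow> a \<le> p i \<and> p i \<le> q i \<and> q i \<le> b) \<Longrightarrow>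
       (\<And>i j. i<n \<Longrightarrow> j<n \<Longrightarrow> i \<noteq> j \<Longrightarrow> q i \<le> p j \<or> q j \<le> p i) \<Longrightarrow>
       (\<Sum>i<n. q i - p i) < \<delta> \<Longrightarrow> (\<Sum>i<n. norm (G (q i) - G (p i))) < e"
  show "\<exists>d>0. \<forall>x'\<in>{a..b}. dist x' x < d \<longrightarrow> dist (G x') (G x) < e"
  proof (intro exI[of _ \<delta>] conjI ballI impI)
    fix x' assume x': "x' \<in> {a..b}" and d: "dist x' x < \<delta>"
    have "(\<Sum>i<Suc 0. norm (G ((\<lambda>_. max x x') i) - G ((\<lambda>_. min x x') i))) < e"
      by (rule H) (use x x' d in \<open>auto simp: dist_real_def\<close>)
    then show "dist (G x') (G x) < e"
      by (cases "x \<le> x'") (auto simp: dist_norm norm_minus_commute max_def min_def)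
  qed (use \<delta> in auto)
  qed
qed

lemma ac_negligible_image:
  fixes G :: "real \<Rightarrow> real"
  assumes ac: "abs_continuous_on a b G" and E: "negligible E" "E \<subseteq> {a..b}"
  shows "negligible (G ` E)"
proof -
  have cont: "continuous_on {a..b} G" by (rule ac_continuous[OF ac])
  define E' where "E' = E \<inter> {a<..<b}"
  have E'neg: "negligible E'" using E(1) unfolding E'_def by (rule negligible_subset) auto
  have main: "\<exists>T. G ` E' \<subseteq> T \<and> T \<in> lmeasurable \<and> measure lebesgue T \<le> e" if e: "e > 0" for e
  proof -
    show ?thesis
    proof (rule acD[OF ac e])
    fix \<delta> assume \<delta>: "\<delta> > 0" and H: "\<And>(n::nat) (p::nat\<Rightarrow>real) q. (\<And>i. i<n \<Longrightarrow> a \<le> p i \<and> p i \<le> q i \<and> q i \<le> b) \<Longrightarrow>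
       (\<And>i j. i<n \<Longrightarrow> j<n \<Longrightarrow> i \<noteq> j \<Longrightarrow> q i \<le> p j \<or> q j \<le> p i) \<Longrightarrow>
       (\<Sum>i<n. q i - p i) < \<delta> \<Longrightarrow> (\<Sum>i<n. norm (G (q i) - G (p i))) < e"
    obtain T where T: "open T" "E' \<subseteq> T" "(T - E') \<in> lmeasurable" "emeasure lebesgue (T - E') < ennreal \<delta>"
      using sets_lebesgue_outer_open[OF negligible_imp_sets[OF E'neg] \<delta>] by blast
    define U where "U = T \<inter> {a<..<b}"
    have Uopen: "open U" unfolding U_def using T(1) by auto
    have EU: "E' \<subseteq> U" unfolding U_def E'_def using T(2) E'_def by auto
    have Usub: "U \<subseteq> {a<..<b}" unfolding U_def by auto
    have Umeas: "U \<in> lmeasurable"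
      using Usub by (intro lmeasurable_open Uopen) (meson bounded_Ioo bounded_subset)
    have mTE: "measure lebesgue (T - E') < \<delta>"
    proof -
      have "ennreal (measure lebesgue (T - E')) < ennreal \<delta>" using T(3,4) by (simp add: emeasure_eq_measure2)
      then show ?thesis by (simp add: ennreal_less_iff[OF measure_nonneg])
    qed
    have E'm: "E' \<in> lmeasurable" "measure lebesgue E' = 0"
      using E'neg negligible_iff_measure by blast+
    have "measure lebesgue U \<le> measure lebesgue ((T - E') \<union> E')"
      by (rule measure_mono_fmeasurable) (use Umeas fmeasurable.Un[OF T(3) E'm(1)] U_def in auto)
    also have "\<dots> \<le> measure lebesgue (T - E') + measure lebesgue E'"
      by (rule measure_Un_le) (use T(3) E'm in auto)
    finally have Ule: "measure lebesgue U < \<delta>" using mTE E'm by simp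
    define K where "K = components U"
    have Kopen: "\<And>C. C \<in> K \<Longrightarrow> open C" unfolding K_def using open_components[OF Uopen] by blast
    have Kne: "\<And>C. C \<in> K \<Longrightarrow> C \<noteq> {}" unfolding K_def using in_components_nonempty by blast
    have KU: "\<And>C. C \<in> K \<Longrightarrow> C \<subseteq> U" unfolding K_def using in_components_subset by blast
    have Kconn: "\<And>C. C \<in> K \<Longrightarrow> connected C" unfolding K_def using in_components_connected by blast
    have Kdisj: "\<And>C C'. C \<in> K \<Longrightarrow> C' \<in> K \<Longrightarrow> C \<noteq> C' \<Longrightarrow> C \<inter> C' = {}"
      unfolding K_def using components_nonoverlap by blast
    have cK: "countable K"
      by (rule countable_disjoint_open_subsets) (use Kopen Kdisj in \<open>auto simp: pairwise_def disjnt_def\<close>)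
    have UK: "U = \<Union>K" unfolding K_def by simp
    have bdd: "bdd_below C" "bdd_above C" if "C \<in> K" for C
      using KU[OF that] Usub by (meson bdd_above_Ioo bdd_below_Ioo bdd_above_mono bdd_below_mono order_trans)+
    have lohi: "a \<le> Inf C" "Inf C \<le> Sup C" "Sup C \<le> b" if CK: "C \<in> K" for C
    proof -
      obtain x where x: "x \<in> C" using Kne[OF CK] by blast
      then have xab: "a < x" "x < b" using KU[OF CK] Usub by auto
      have "\<forall>y\<in>C. a \<le> y" "\<forall>y\<in>C. y \<le> b" using KU[OF CK] Usub by fastforce+
      then show "a \<le> Inf C" "Sup C \<le> b" using Kne[OF CK]
        by (auto intro: cInf_greatest cSup_least)
      show "Inf C \<le> Sup C" using x bdd[OF CK] by (meson cInf_lower cSup_upper order_trans)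
    qed
    have Csub: "C \<subseteq> {Inf C..Sup C}" if CK: "C \<in> K" for C
      using bdd[OF CK] by (auto intro: cInf_lower cSup_upper)
    have Cinner: "{Inf C<..<Sup C} \<subseteq> C" if CK: "C \<in> K" for C
    proof
      fix z assume z: "z \<in> {Inf C<..<Sup C}"
      obtain x where "x \<in> C" "x < z" using z Kne[OF CK] bdd[OF CK] by (auto simp: cInf_less_iff)
      moreover obtain y where "y \<in> C" "z < y" using z Kne[OF CK] bdd[OF CK] by (auto simp: less_cSup_iff)
      ultimately show "z \<in> C" using Kconn[OF CK] unfolding connected_iff_interval by (meson less_imp_le)
    qed
    have "\<forall>C\<in>K. \<exists>\<alpha>\<in>{Inf C..Sup C}. \<exists>\<beta>\<in>{Inf C..Sup C}. \<forall>x\<in>{Inf C..Sup C}. G \<alpha> \<le> G x \<and> G x \<le> G \<beta>"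
    proof
      fix C assume C: "C \<in> K"
      have cC: "continuous_on {Inf C..Sup C} G"
        by (rule continuous_on_subset[OF cont]) (use lohi[OF C] in auto)
      obtain \<alpha> where "\<alpha> \<in> {Inf C..Sup C}" "\<forall>y\<in>{Inf C..Sup C}. G \<alpha> \<le> G y"
        using continuous_attains_inf[OF compact_Icc _ cC] lohi[OF C] by auto
      moreover obtain \<beta> where "\<beta> \<in> {Inf C..Sup C}" "\<forall>y\<in>{Inf C..Sup C}. G y \<le> G \<beta>"
        using continuous_attains_sup[OF compact_Icc _ cC] lohi[OF C] by auto
      ultimately show "\<exists>\<alpha>\<in>{Inf C..Sup C}. \<exists>\<beta>\<in>{Inf C..Sup C}. \<forall>x\<in>{Inf C..Sup C}. G \<alpha> \<le> G x \<and> G x \<le> G \<beta>"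
        by blast
    qed
    then obtain \<alpha> \<beta> where ab: "\<And>C. C \<in> K \<Longrightarrow> \<alpha> C \<in> {Inf C..Sup C} \<and> \<beta> C \<in> {Inf C..Sup C} \<and>
        (\<forall>x\<in>{Inf C..Sup C}. G (\<alpha> C) \<le> G x \<and> G x \<le> G (\<beta> C))"
      by metis
    define A where "A C = {G (\<alpha> C) .. G (\<beta> C)}" for C
    have GA: "G ` C \<subseteq> A C" if "C \<in> K" for C
      using ab[OF that] Csub[OF that] unfolding A_def by fastforce
    have sep: "Sup C \<le> Inf C' \<or> Sup C' \<le> Inf C" if CK: "C \<in> K" "C' \<in> K" "C \<noteq> C'" for C C'
    proof -
      have dis: "C \<inter> C' = {}" using Kdisj CK by blast
      obtain x where x: "x \<in> C" using Kne CK by blast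
      obtain y where y: "y \<in> C'" using Kne CK by blast
      have lt: "\<forall>z\<in>C. \<forall>w\<in>C'. z < w" if "x < y" "x \<in> C" "y \<in> C'" "C \<in> K" "C' \<in> K" "C \<inter> C' = {}" for x y C C'
      proof (intro ballI, rule ccontr)
        fix z w assume zw: "z \<in> C" "w \<in> C'" "\<not> z < w"
        show False
        proof (cases "x \<le> w")
          case True
          then have "w \<in> C" using Kconn[OF that(4)] zw that unfolding connected_iff_interval by (meson not_less)
          then show False using zw that by blast
        next
          case False
          then have "x \<in> C'" using Kconn[OF that(5)] zw that unfolding connected_iff_interval by (meson less_imp_le not_le)
          then show False using that by blast
        qed
      qed
      have "x \<noteq> y" using x y dis by blast
      then consider "x < y" | "y < x" by linarith
      then show ?thesis
      proof cases
        case 1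
        then have "\<forall>z\<in>C. \<forall>w\<in>C'. z < w" using lt[OF 1 x y CK(1,2) dis] by blast
        then have "Sup C \<le> Inf C'"
          using Kne CK by (meson cSup_least cInf_greatest less_imp_le)
        then show ?thesis by blast
      next
        case 2
        then have "\<forall>z\<in>C'. \<forall>w\<in>C. z < w" using lt[OF 2 y x CK(2,1)] dis by blast
        then have "Sup C' \<le> Inf C"
          using Kne CK by (meson cSup_least cInf_greatest less_imp_le)
        then show ?thesis by blast
      qed
    qed
    have bound: "measure lebesgue (\<Union>C\<in>I. A C) \<le> e" if I: "I \<subseteq> K" "finite I" for I
    proof -
      define n where "n = card I"
      define f where "f = from_nat_into I"
      have bij: "bij_betw f {..<n} I" unfolding f_def n_def by (rule bij_betw_from_nat_into_finite[OF I(2)])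
      have fK: "i < n \<Longrightarrow> f i \<in> K" for i using bij I(1) by (auto simp: bij_betw_def)
      have finj: "i < n \<Longrightarrow> j < n \<Longrightarrow> i \<noteq> j \<Longrightarrow> f i \<noteq> f j" for i j
        using bij by (auto simp: bij_betw_def inj_on_def)
      define p where "p i = min (\<alpha> (f i)) (\<beta> (f i))" for i
      define q where "q i = max (\<alpha> (f i)) (\<beta> (f i))" for i
      have pq: "Inf (f i) \<le> p i" "p i \<le> q i" "q i \<le> Sup (f i)" if "i < n" for i
        using ab[OF fK[OF that]] unfolding p_def q_def by auto
      have "(\<Sum>i<n. q i - p i) \<le> (\<Sum>i<n. Sup (f i) - Inf (f i))"
        by (rule sum_mono) (use pq in fastforce)
      also have "\<dots> \<le> (\<Sum>i<n. measure lebesgue (f i))"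
      proof (rule sum_mono)
        fix i assume "i \<in> {..<n}"
        then have i: "i < n" by simp
        have "Sup (f i) - Inf (f i) = measure lebesgue {Inf (f i)<..<Sup (f i)}"
          using lohi[OF fK[OF i]] by (simp add: measure_completion measure_def)
        also have "\<dots> \<le> measure lebesgue (f i)"
          by (rule measure_mono_fmeasurable) (use Cinner[OF fK[OF i]] Kopen[OF fK[OF i]] KU[OF fK[OF i]] Usub
              in \<open>auto intro!: lmeasurable_open bounded_subset[OF bounded_Ioo[of a b]]\<close>)
        finally show "Sup (f i) - Inf (f i) \<le> measure lebesgue (f i)" .
      qed
      also have "\<dots> = measure lebesgue (\<Union>i\<in>{..<n}. f i)"
      proof (rule measure_finite_Union[symmetric])
        show "disjoint_family_on f {..<n}"
          unfolding disjoint_family_on_def using Kdisj fK finj by auto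
        show "f ` {..<n} \<subseteq> sets lebesgue" using fK Kopen by auto
        show "emeasure lebesgue (f i) \<noteq> \<infinity>" if "i \<in> {..<n}" for i
        proof -
          have "f i \<in> lmeasurable" using fK[of i] that Kopen[of "f i"] KU[of "f i"] Usub
            by (auto intro!: lmeasurable_open bounded_subset[OF bounded_Ioo[of a b]])
          then show ?thesis using fmeasurableD2 by (metis infinity_ennreal_def)
        qed
      qed simp
      also have "\<dots> \<le> measure lebesgue U"
        by (rule measure_mono_fmeasurable) (use fK KU Umeas Kopen in auto)
      finally have sl: "(\<Sum>i<n. q i - p i) < \<delta>" using Ule by linarith
      have ac_app: "(\<Sum>i<n. norm (G (q i) - G (p i))) < e"
      proof (rule H)
        show "a \<le> p i \<and> p i \<le> q i \<and> q i \<le> b" if "i < n" for i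
          using pq[OF that] lohi[OF fK[OF that]] by auto
        show "q i \<le> p j \<or> q j \<le> p i" if "i < n" "j < n" "i \<noteq> j" for i j
          using sep[OF fK[OF that(1)] fK[OF that(2)] finj[OF that]] pq[OF that(1)] pq[OF that(2)] by linarith
      qed (rule sl)
      have Gab: "G (\<alpha> C) \<le> G (\<beta> C)" if "C \<in> K" for C using ab[OF that] by blast
      have "measure lebesgue (\<Union>C\<in>I. A C) \<le> (\<Sum>C\<in>I. measure lebesgue (A C))"
        by (rule measure_UNION_le[OF I(2)]) (auto simp: A_def)
      also have "\<dots> = (\<Sum>C\<in>I. G (\<beta> C) - G (\<alpha> C))"
        by (rule sum.cong) (use Gab I(1) in \<open>auto simp: A_def measure_completion measure_def\<close>)
      also have "\<dots> = (\<Sum>i<n. G (\<beta> (f i)) - G (\<alpha> (f i)))"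
        using sum.reindex_bij_betw[OF bij, of "\<lambda>C. G (\<beta> C) - G (\<alpha> C)"] by simp
      also have "\<dots> = (\<Sum>i<n. norm (G (q i) - G (p i)))"
      proof (rule sum.cong[OF refl])
        fix i assume "i \<in> {..<n}"
        then have "G (\<alpha> (f i)) \<le> G (\<beta> (f i))" using Gab fK by auto
        then show "G (\<beta> (f i)) - G (\<alpha> (f i)) = norm (G (q i) - G (p i))"
          unfolding p_def q_def by (cases "\<alpha> (f i) \<le> \<beta> (f i)") (auto simp: max_def min_def)
      qed
      finally show ?thesis using ac_app by linarith
    qed
    have Afm: "(\<Union>C\<in>K. A C) \<in> fmeasurable lebesgue" and Ale: "measure lebesgue (\<Union>C\<in>K. A C) \<le> e"
      using fmeasurable_UN_bound[OF cK _ bound] measure_UN_bound[OF cK _ bound] by (auto simp: A_def)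
    have "G ` E' \<subseteq> (\<Union>C\<in>K. A C)"
      using EU UK GA by blast
    then show ?thesis using Afm Ale by blast
    qed
  qed
  have negE': "negligible (G ` E')"
    unfolding negligible_outer_le using main by blast
  have "G ` E \<subseteq> G ` E' \<union> {G a, G b}"
  proof
    fix y assume "y \<in> G ` E"
    then obtain x where x: "x \<in> E" "y = G x" by blast
    then have "x \<in> E' \<or> x = a \<or> x = b" using E(2) unfolding E'_def by fastforce
    then show "y \<in> G ` E' \<union> {G a, G b}" using x by blast
  qed
  moreover have "negligible (G ` E' \<union> {G a, G b})"
    using negE' by (simp add: negligible_insert)
  ultimately show ?thesis using negligible_subset by blast
qed




lemma crossing:
  fixes G :: "real \<Rightarrow> real"
  assumes cont: "continuous_on {a..b} G" and ab: "a \<le> b" and y: "G a < y" "y < G b"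
  obtains c where "c \<in> {a<..<b}" "G c = y" "\<And>x. x \<in> {c<..b} \<Longrightarrow> y < G x"
proof -
  define L where "L = {a..b} \<inter> G -` {..y}"
  have Lcl: "closed L" unfolding L_def by (rule continuous_closed_preimage[OF cont]) auto
  have Lne: "L \<noteq> {}" using y ab unfolding L_def by auto
  have Lbdd: "bdd_above L" unfolding L_def by (auto intro: bdd_aboveI[of _ b])
  define c where "c = Sup L"
  have cL: "c \<in> L" unfolding c_def by (rule closed_contains_Sup[OF Lne Lbdd Lcl])
  then have c: "a \<le> c" "c \<le> b" "G c \<le> y" unfolding L_def by auto
  have above: "y < G x" if "x \<in> {c<..b}" for x
  proof (rule ccontr)
    assume "\<not> y < G x"
    then have "x \<in> L" using that c unfolding L_def by auto
    then have "x \<le> c" unfolding c_def using Lbdd by (rule cSup_upper)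
    then show False using that by auto
  qed
  have cb: "c < b" using c y by (metis order.not_eq_order_implies_strict not_le)
  have Gc: "G c = y"
  proof (rule ccontr)
    assume "G c \<noteq> y"
    then have lt: "G c < y" using c by auto
    obtain d where d: "d > 0" "\<And>x'. x' \<in> {a..b} \<Longrightarrow> dist x' c < d \<Longrightarrow> dist (G x') (G c) < y - G c"
      using cont c(1,2) lt unfolding continuous_on_iff by (metis atLeastAtMost_iff diff_gt_0_iff_gt)
    define x where "x = min b (c + d/2)"
    have x: "x \<in> {c<..b}" "x \<in> {a..b}" "dist x c < d" using cb c d unfolding x_def by (auto simp: dist_real_def)
    have "G x < y" using d(2)[OF x(2,3)] by (auto simp: dist_real_def)
    then show False using above[OF x(1)] by simp
  qed
  have "a < c" using Gc y c by (metis order.not_eq_order_implies_strict order_less_irrefl)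
  then show ?thesis using that cb Gc above by auto
qed

lemma deriv_sign_right:
  fixes G :: "real \<Rightarrow> real"
  assumes der: "(G has_real_derivative D) (at c within {a..b})" and c: "a \<le> c" "c < b"
    and incr: "\<And>x. x \<in> {c<..b} \<Longrightarrow> G c < G x"
  shows "0 \<le> D"
proof -
  have "(G has_real_derivative D) (at c within {c..b})"
    using der by (rule DERIV_subset) (use c in auto)
  then have "((\<lambda>x. (G x - G c) / (x - c)) \<longlongrightarrow> D) (at_right c)"
    using at_within_Icc_at_right[OF c(2)] by (simp add: has_field_derivative_iff)
  moreover have "eventually (\<lambda>x. 0 \<le> (G x - G c) / (x - c)) (at_right c)"
    unfolding eventually_at_right_field
  proof (intro exI[of _ b] conjI allI impI)
    fix y assume "c < y" "y < b"
    then show "0 \<le> (G y - G c) / (y - c)" using incr[of y] by auto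
  qed (rule c(2))
  ultimately show ?thesis
    by (rule tendsto_lowerbound) simp
qed




lemma ac_deriv_le_integral:
  fixes G h :: "real \<Rightarrow> real"
  assumes ab: "a \<le> b" and ac: "abs_continuous_on a b G"
    and der: "AE x in lborel. x \<in> {a..b} \<longrightarrow> (\<exists>D. (G has_real_derivative D) (at x within {a..b}) \<and> D \<le> h x)"
    and hint: "h integrable_on {a..b}" and h0: "\<And>x. x \<in> {a..b} \<Longrightarrow> 0 \<le> h x"
  shows "G b - G a \<le> integral {a..b} h"
proof (cases "G b \<le> G a")
  case True
  have "0 \<le> integral {a..b} h" using hint h0 by (rule integral_nonneg)
  then show ?thesis using True by linarith
next
  case False
  then have lt: "G a < G b" by simp
  have cont: "continuous_on {a..b} G" by (rule ac_continuous[OF ac])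
  obtain N where N: "{x \<in> space lborel. \<not> (x \<in> {a..b} \<longrightarrow> (\<exists>D. (G has_real_derivative D) (at x within {a..b}) \<and> D \<le> h x))} \<subseteq> N"
     "emeasure lborel N = 0" "N \<in> sets lborel"
    using der by (rule AE_E)
  define S0 where "S0 = {a<..<b} - N"
  have S0good: "\<exists>D. (G has_real_derivative D) (at x within {a..b}) \<and> D \<le> h x" if "x \<in> S0" for x
  proof (rule ccontr)
    assume "\<not> ?thesis"
    then have "x \<in> {x \<in> space lborel. \<not> (x \<in> {a..b} \<longrightarrow> (\<exists>D. (G has_real_derivative D) (at x within {a..b}) \<and> D \<le> h x))}"
      using that unfolding S0_def by auto
    then show False using N(1) that unfolding S0_def by blast
  qed
  define Gd where "Gd x = (SOME D. (G has_real_derivative D) (at x within {a..b}) \<and> D \<le> h x)" for x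
  have Gd: "(G has_real_derivative Gd x) (at x within {a..b})" "Gd x \<le> h x" if "x \<in> S0" for x
    using someI_ex[OF S0good[OF that]] unfolding Gd_def by auto
  have S0leb: "S0 \<in> sets lebesgue"
  proof -
    have "S0 \<in> sets lborel" unfolding S0_def using N(3) by auto
    then show ?thesis by (rule sets_completionI_sets)
  qed
  define Ge where "Ge y = G (max a (min b y))" for y
  have Ge_cont: "continuous_on UNIV Ge"
    unfolding Ge_def
    by (rule continuous_on_compose2[OF cont]) (use ab in \<open>auto intro!: continuous_intros\<close>)
  define Dq where "Dq n x = real (Suc n) * (Ge (x + 1/real (Suc n)) - Ge x)" for n x
  have Dq_cont: "continuous_on UNIV (Dq n)" for n
  proof -
    have "continuous_on UNIV (\<lambda>x. Ge (x + 1/real (Suc n)))"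
      by (rule continuous_on_compose2[OF Ge_cont]) (auto intro!: continuous_intros)
    then show ?thesis unfolding Dq_def using Ge_cont by (auto intro!: continuous_intros)
  qed
  have lim: "(\<lambda>n. Dq n x) \<longlonglongrightarrow> Gd x" if "x \<in> S0" for x
  proof -
    have xab: "a < x" "x < b" using that unfolding S0_def by auto
    have "(G has_real_derivative Gd x) (at x)"
      using Gd(1)[OF that] at_within_interior[of x "{a..b}"] xab by simp
    then have Q: "((\<lambda>y. (G y - G x) / (y - x)) \<longlongrightarrow> Gd x) (at x)" by (simp add: has_field_derivative_iff)
    have s0: "(\<lambda>n. 1 / real (Suc n)) \<longlonglongrightarrow> 0"
      using LIMSEQ_inverse_real_of_nat by (simp add: inverse_eq_divide)
    have s: "filterlim (\<lambda>n. x + 1/real (Suc n)) (at x) sequentially"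
      unfolding filterlim_at
    proof
      show "\<forall>\<^sub>F n in sequentially. x + 1/real(Suc n) \<in> UNIV \<and> x + 1/real(Suc n) \<noteq> x" by simp
      have "(\<lambda>n. x + 1/real (Suc n)) \<longlonglongrightarrow> x + 0" by (intro tendsto_intros s0)
      then show "(\<lambda>n. x + 1/real(Suc n)) \<longlonglongrightarrow> x" by simp
    qed
    have L: "(\<lambda>n. (G (x + 1/real(Suc n)) - G x) / ((x + 1/real(Suc n)) - x)) \<longlonglongrightarrow> Gd x"
      using filterlim_compose[OF Q s] by simp
    obtain M where M: "inverse (real (Suc M)) < b - x" using reals_Archimedean xab by (metis diff_gt_0_iff_gt)
    have ev: "\<forall>\<^sub>F n in sequentially. (G (x + 1/real(Suc n)) - G x) / ((x + 1/real(Suc n)) - x) = Dq n x"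
      unfolding eventually_sequentially
    proof (intro exI[of _ M] allI impI)
      fix n assume "M \<le> n"
      then have "1/real(Suc n) \<le> 1/real(Suc M)" by (simp add: frac_le)
      then have xb: "x + 1/real(Suc n) < b" using M by (simp add: inverse_eq_divide)
      have "0 < 1/real(Suc n)" by simp
      then have "a < x + 1/real(Suc n)" using xab by linarith
      then have e1: "Ge (x + 1/real(Suc n)) = G (x + 1/real(Suc n))" using xb unfolding Ge_def
        by (simp add: max_def min_def)
      have e2: "Ge x = G x" using xab unfolding Ge_def by simp
      show "(G (x + 1/real(Suc n)) - G x) / ((x + 1/real(Suc n)) - x) = Dq n x"
        unfolding Dq_def e1 e2 by simp
    qed
    show ?thesis by (rule Lim_transform_eventually[OF L ev])
  qed
  have Gdmeas: "Gd \<in> borel_measurable (lebesgue_on T)" if T: "T \<subseteq> S0" "T \<in> sets lebesgue" for T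
  proof (rule borel_measurable_LIMSEQ_real[where u=Dq])
    show "(\<lambda>n. Dq n x) \<longlonglongrightarrow> Gd x" if "x \<in> space (lebesgue_on T)" for x
      using lim that T by auto
    show "Dq n \<in> borel_measurable (lebesgue_on T)" for n
      by (rule continuous_imp_measurable_on_sets_lebesgue[OF continuous_on_subset[OF Dq_cont] T(2)]) simp
  qed
  define Spos where "Spos = {x \<in> S0. 0 \<le> Gd x}"
  have SposS0: "Spos \<subseteq> S0" unfolding Spos_def by auto
  have Sposab: "Spos \<subseteq> {a..b}" using SposS0 unfolding S0_def by auto
  have Sposleb: "Spos \<in> sets lebesgue"
  proof -
    have "Gd -` {0..} \<inter> space (lebesgue_on S0) \<in> sets (lebesgue_on S0)"
      by (rule measurable_sets[OF Gdmeas[OF subset_refl S0leb]]) simp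
    moreover have "Gd -` {0..} \<inter> space (lebesgue_on S0) = Spos"
      unfolding Spos_def using S0leb by auto
    ultimately have "Spos \<in> sets (lebesgue_on S0)" by simp
    then show ?thesis using S0leb by (simp add: sets_restrict_space_iff)
  qed
  have habs: "h absolutely_integrable_on {a..b}"
    by (rule nonnegative_absolutely_integrable_1[OF hint h0])
  have hSpos: "h integrable_on Spos"
  proof -
    have "h absolutely_integrable_on Spos"
      by (rule set_integrable_subset[OF habs Sposleb Sposab])
    then show ?thesis by (rule set_lebesgue_integral_eq_integral(1))
  qed
  have Gdint: "(\<lambda>x. \<bar>Gd x\<bar>) integrable_on Spos"
  proof (rule measurable_bounded_by_integrable_imp_integrable[OF _ hSpos _ Sposleb])
    show "(\<lambda>x. \<bar>Gd x\<bar>) \<in> borel_measurable (lebesgue_on Spos)"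
      using Gdmeas[OF SposS0 Sposleb] by measurable
    show "norm \<bar>Gd x\<bar> \<le> h x" if "x \<in> Spos" for x
      using that Gd(2)[of x] SposS0 unfolding Spos_def by auto
  qed
  have derS: "(G has_real_derivative Gd x) (at x within Spos)" if "x \<in> Spos" for x
    using Gd(1)[of x] that SposS0 Sposab by (auto intro: DERIV_subset)
  have img: "G ` Spos \<in> lmeasurable" "measure lebesgue (G ` Spos) \<le> integral Spos (\<lambda>x. \<bar>Gd x\<bar>)"
    using image_measure_1d[OF Sposleb derS Gdint] by auto
  have "integral Spos (\<lambda>x. \<bar>Gd x\<bar>) \<le> integral Spos h"
    by (rule integral_le[OF Gdint hSpos]) (use Gd(2) SposS0 Spos_def in auto)
  also have "\<dots> \<le> integral {a..b} h"
    by (rule integral_subset_le[OF Sposab hSpos hint]) (use h0 in auto)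
  finally have imgle: "measure lebesgue (G ` Spos) \<le> integral {a..b} h" using img(2) by linarith
  define NE where "NE = {a..b} \<inter> N"
  have NEneg: "negligible NE"
  proof -
    have "N \<in> null_sets lborel" using N(2,3) by (simp add: null_sets_def)
    then have "negligible N" unfolding negligible_iff_null_sets by (rule null_sets_completionI)
    then show ?thesis unfolding NE_def by (rule negligible_subset) auto
  qed
  have negimg: "negligible (G ` NE)"
    by (rule ac_negligible_image[OF ac NEneg]) (auto simp: NE_def)
  have cover: "{G a<..<G b} \<subseteq> G ` NE \<union> G ` Spos"
  proof
    fix y assume "y \<in> {G a<..<G b}"
    then have y: "G a < y" "y < G b" by auto
    obtain c where c: "c \<in> {a<..<b}" "G c = y" "\<And>x. x \<in> {c<..b} \<Longrightarrow> y < G x"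
      using crossing[OF cont ab y] by blast
    show "y \<in> G ` NE \<union> G ` Spos"
    proof (cases "c \<in> N")
      case True
      then have "c \<in> NE" using c(1) unfolding NE_def by auto
      then show ?thesis using c(2) by blast
    next
      case False
      then have cS0: "c \<in> S0" using c(1) unfolding S0_def by auto
      have "0 \<le> Gd c"
        by (rule deriv_sign_right[OF Gd(1)[OF cS0]]) (use c in auto)
      then have "c \<in> Spos" using cS0 unfolding Spos_def by auto
      then show ?thesis using c(2) by blast
    qed
  qed
  have negm: "G ` NE \<in> lmeasurable" "measure lebesgue (G ` NE) = 0"
    using negimg negligible_iff_measure by blast+
  have "G b - G a = measure lebesgue {G a<..<G b}"
    using lt by (simp add: measure_completion measure_def)
  also have "\<dots> \<le> measure lebesgue (G ` NE \<union> G ` Spos)"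
    by (rule measure_mono_fmeasurable[OF cover]) (use fmeasurable.Un[OF negm(1) img(1)] in auto)
  also have "\<dots> \<le> measure lebesgue (G ` NE) + measure lebesgue (G ` Spos)"
    by (rule measure_Un_le) (use negm img in auto)
  finally show ?thesis using negm(2) imgle by linarith
qed




lemma ac_sub:
  fixes f :: "real \<Rightarrow> 'a::real_normed_vector"
  assumes "abs_continuous_on a b f" "a \<le> c" "d \<le> b"
  shows "abs_continuous_on c d f"
  unfolding abs_continuous_on_def
proof (intro allI impI)
  fix e :: real assume e: "e > 0"
  obtain \<delta> where "\<delta> > 0" and H: "\<forall>(n::nat) (p::nat \<Rightarrow> real) (q::nat \<Rightarrow> real).
        (\<forall>i<n. a \<le> p i \<and> p i \<le> q i \<and> q i \<le> b) \<and>
        (\<forall>i<n. \<forall>j<n. i \<noteq> j \<longrightarrow> q i \<le> p j \<or> q j \<le> p i) \<and>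
        (\<Sum>i<n. q i - p i) < \<delta>
        \<longrightarrow> (\<Sum>i<n. norm (f (q i) - f (p i))) < e"
    using assms(1) e unfolding abs_continuous_on_def by blast
  show "\<exists>\<delta>>0. \<forall>(n::nat) (p::nat \<Rightarrow> real) (q::nat \<Rightarrow> real).
        (\<forall>i<n. c \<le> p i \<and> p i \<le> q i \<and> q i \<le> d) \<and>
        (\<forall>i<n. \<forall>j<n. i \<noteq> j \<longrightarrow> q i \<le> p j \<or> q j \<le> p i) \<and>
        (\<Sum>i<n. q i - p i) < \<delta>
        \<longrightarrow> (\<Sum>i<n. norm (f (q i) - f (p i))) < e"
  proof (intro exI[of _ \<delta>] conjI allI impI)
    fix n :: nat and p q :: "nat \<Rightarrow> real"
    assume A: "(\<forall>i<n. c \<le> p i \<and> p i \<le> q i \<and> q i \<le> d) \<and>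
        (\<forall>i<n. \<forall>j<n. i \<noteq> j \<longrightarrow> q i \<le> p j \<or> q j \<le> p i) \<and> (\<Sum>i<n. q i - p i) < \<delta>"
    have "(\<forall>i<n. a \<le> p i \<and> p i \<le> q i \<and> q i \<le> b)" using A assms(2,3) by force
    then show "(\<Sum>i<n. norm (f (q i) - f (p i))) < e" using H A by blast
  qed (rule \<open>\<delta> > 0\<close>)
qed

lemma ac_lip:
  fixes f :: "real \<Rightarrow> 'a::real_normed_vector" and g :: "real \<Rightarrow> 'b::real_normed_vector"
  assumes ac: "abs_continuous_on a b f" and L: "L > 0"
    and lip: "\<And>x y. x \<in> {a..b} \<Longrightarrow> y \<in> {a..b} \<Longrightarrow> norm (g y - g x) \<le> L * norm (f y - f x)"
  shows "abs_continuous_on a b g"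
  unfolding abs_continuous_on_def
proof (intro allI impI)
  fix e :: real assume e: "e > 0"
  then have eL: "e / L > 0" using L by simp
  show "\<exists>\<delta>>0. \<forall>(n::nat) (p::nat \<Rightarrow> real) (q::nat \<Rightarrow> real).
        (\<forall>i<n. a \<le> p i \<and> p i \<le> q i \<and> q i \<le> b) \<and>
        (\<forall>i<n. \<forall>j<n. i \<noteq> j \<longrightarrow> q i \<le> p j \<or> q j \<le> p i) \<and>
        (\<Sum>i<n. q i - p i) < \<delta>
        \<longrightarrow> (\<Sum>i<n. norm (g (q i) - g (p i))) < e"
  proof (rule acD[OF ac eL])
    fix \<delta> assume \<delta>: "\<delta> > 0" and H: "\<And>(n::nat) (p::nat\<Rightarrow>real) q. (\<And>i. i<n \<Longrightarrow> a \<le> p i \<and> p i \<le> q i \<and> q i \<le> b) \<Longrightarrow>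
       (\<And>i j. i<n \<Longrightarrow> j<n \<Longrightarrow> i \<noteq> j \<Longrightarrow> q i \<le> p j \<or> q j \<le> p i) \<Longrightarrow>
       (\<Sum>i<n. q i - p i) < \<delta> \<Longrightarrow> (\<Sum>i<n. norm (f (q i) - f (p i))) < e / L"
    show ?thesis
    proof (intro exI[of _ \<delta>] conjI allI impI)
      fix n :: nat and p q :: "nat \<Rightarrow> real"
      assume A: "(\<forall>i<n. a \<le> p i \<and> p i \<le> q i \<and> q i \<le> b) \<and>
        (\<forall>i<n. \<forall>j<n. i \<noteq> j \<longrightarrow> q i \<le> p j \<or> q j \<le> p i) \<and> (\<Sum>i<n. q i - p i) < \<delta>"
      have "(\<Sum>i<n. norm (f (q i) - f (p i))) < e / L"
        by (rule H) (use A in auto)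
      moreover have "(\<Sum>i<n. norm (g (q i) - g (p i))) \<le> (\<Sum>i<n. L * norm (f (q i) - f (p i)))"
        by (rule sum_mono) (use A lip in auto)
      ultimately show "(\<Sum>i<n. norm (g (q i) - g (p i))) < e"
        using L by (simp add: sum_distrib_left[symmetric] pos_less_divide_eq mult.commute)
    qed (rule \<delta>)
  qed
qed

lemma Re_set_integral_nonpos:
  fixes f :: "real \<Rightarrow> complex"
  assumes "\<And>x. x \<in> A \<Longrightarrow> Re (f x) \<le> 0"
  shows "Re (set_lebesgue_integral M A f) \<le> 0"
proof -
  let ?g = "\<lambda>x. indicator A x *\<^sub>R f x"
  have pt: "Re (?g x) \<le> 0" for x using assms[of x] by (auto simp: indicator_def)
  show ?thesis
  proof (cases "integrable M ?g")
    case True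
    have "Re (integral\<^sup>L M ?g) = (LINT x|M. Re (?g x))" by (rule integral_Re[OF True, symmetric])
    also have "\<dots> \<le> (LINT x|M. 0)"
      by (rule integral_mono[OF integrable_Re[OF True]]) (use pt in auto)
    finally show ?thesis by (simp add: set_lebesgue_integral_def)
  next
    case False
    then show ?thesis by (simp add: set_lebesgue_integral_def not_integrable_integral_eq)
  qed
qed

lemma phi_Re_le:
  assumes "Re \<zeta> > 0" "q r \<ge> 0"
  shows "Re (herglotz_phi q d \<pi> \<zeta> r) \<le> d r * Re \<zeta>"
proof -
  have "Re (set_lebesgue_integral (\<pi> r) {0<..} (\<lambda>x. exp (- \<zeta> * complex_of_real x) - 1)) \<le> 0"
  proof (rule Re_set_integral_nonpos)
    fix x :: real assume "x \<in> {0<..}"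
    then have x: "x > 0" by simp
    have "Re (exp (- \<zeta> * complex_of_real x)) \<le> cmod (exp (- \<zeta> * complex_of_real x))"
      by (rule complex_Re_le_cmod)
    also have "\<dots> = exp (- Re \<zeta> * x)" by (simp add: norm_exp_eq_Re)
    also have "\<dots> \<le> 1" using assms(1) x by (simp add: mult_pos_pos)
    finally show "Re (exp (- \<zeta> * complex_of_real x) - 1) \<le> 0" by simp
  qed
  then show ?thesis using assms(2) unfolding herglotz_phi_def by simp
qed





lemma v_lower:
  fixes q d :: "real \<Rightarrow> real" and \<pi> :: "real \<Rightarrow> real measure"
    and v :: "real \<Rightarrow> real \<Rightarrow> complex \<Rightarrow> complex"
  assumes q_nonneg: "\<forall>t\<ge>0. q t \<ge> 0"
    and d_loc: "\<forall>T\<ge>0. set_integrable lborel {0..T} d"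
    and v_ev: "reverse_evolution_family (herglotz_phi q d \<pi>) v"
    and st: "0 \<le> s" "s \<le> t" and \<theta>: "\<theta> > 0"
  shows "\<theta> * exp (- integral {0..t} (\<lambda>r. \<bar>d r\<bar>)) \<le> Re (v s t (complex_of_real \<theta>))"
proof -
  define \<zeta> where "\<zeta> = complex_of_real \<theta>"
  have t0: "t \<ge> 0" using st by linarith
  have \<zeta>H: "\<zeta> \<in> right_half_plane" using \<theta> by (simp add: \<zeta>_def right_half_plane_def)
  have V: "v t t \<zeta> = \<zeta>" "\<forall>r\<in>{0..t}. v r t \<zeta> \<in> right_half_plane"
    "abs_continuous_on 0 t (\<lambda>r. v r t \<zeta>)"
    "AE r in lborel. r \<in> {0..t} \<longrightarrow>
       ((\<lambda>r. v r t \<zeta>) has_vector_derivative herglotz_phi q d \<pi> (v r t \<zeta>) r) (at r within {0..t})"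
    using v_ev t0 \<zeta>H unfolding reverse_evolution_family_def by blast+
  define u where "u r = Re (v r t \<zeta>)" for r
  have upos: "0 < u r" if "r \<in> {0..t}" for r
    using V(2) that unfolding u_def right_half_plane_def by auto
  have vcont: "continuous_on {0..t} (\<lambda>r. v r t \<zeta>)" by (rule ac_continuous[OF V(3)])
  have ucont: "continuous_on {s..t} u"
    unfolding u_def by (rule continuous_on_subset[OF continuous_on_Re[OF vcont]]) (use st in auto)
  obtain r0 where r0: "r0 \<in> {s..t}" "\<forall>r\<in>{s..t}. u r0 \<le> u r"
    using continuous_attains_inf[OF compact_Icc _ ucont] st by auto
  define m where "m = u r0"
  have m: "m > 0" "\<And>r. r \<in> {s..t} \<Longrightarrow> m \<le> u r"
    using upos[of r0] r0 st unfolding m_def by auto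
  define G where "G r = ln (u r)" for r
  have acv: "abs_continuous_on s t (\<lambda>r. v r t \<zeta>)" by (rule ac_sub[OF V(3)]) (use st in auto)
  have lnlip: "\<bar>ln y - ln x\<bar> \<le> \<bar>y - x\<bar> / m" if "m \<le> x" "m \<le> y" for x y
  proof -
    have lx: "ln y - ln x \<le> (y - x) / x" if "0 < x" "0 < y" for x y :: real
    proof -
      have "ln (y / x) \<le> y / x - 1" by (rule ln_le_minus_one) (use that in simp)
      then show ?thesis using that by (simp add: ln_div diff_divide_distrib)
    qed
    have "ln y - ln x \<le> \<bar>y - x\<bar> / m"
    proof -
      have "ln y - ln x \<le> (y - x) / x" using lx[of x y] that m by linarith
      also have "\<dots> \<le> \<bar>y - x\<bar> / m"
      proof (cases "y \<ge> x")
        case True then show ?thesis using that m by (simp add: frac_le)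
      next
        case False
        then have "(y - x) / x \<le> 0" using that m by (simp add: divide_nonpos_pos)
        moreover have "0 \<le> \<bar>y - x\<bar> / m" using m by simp
        ultimately show ?thesis by linarith
      qed
      finally show ?thesis .
    qed
    moreover have "ln x - ln y \<le> \<bar>y - x\<bar> / m"
    proof -
      have "ln x - ln y \<le> (x - y) / y" using lx[of y x] that m by linarith
      also have "\<dots> \<le> \<bar>y - x\<bar> / m"
      proof (cases "x \<ge> y")
        case True then show ?thesis using that m by (simp add: frac_le)
      next
        case False
        then have "(x - y) / y \<le> 0" using that m by (simp add: divide_nonpos_pos)
        moreover have "0 \<le> \<bar>y - x\<bar> / m" using m by simp
        ultimately show ?thesis by linarith
      qed
      finally show ?thesis .
    qed
    ultimately show ?thesis by linarith
  qed
  have acG: "abs_continuous_on s t G"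
  proof (rule ac_lip[OF acv, of "1/m"])
    show "0 < 1/m" using m by simp
    fix x y assume xy: "x \<in> {s..t}" "y \<in> {s..t}"
    have "norm (G y - G x) \<le> \<bar>u y - u x\<bar> / m"
      unfolding G_def using lnlip[OF m(2)[OF xy(1)] m(2)[OF xy(2)]] by simp
    also have "\<dots> \<le> norm (v y t \<zeta> - v x t \<zeta>) / m"
      unfolding u_def using m by (intro divide_right_mono) (auto intro: abs_Re_le_cmod[THEN order_trans] simp flip: minus_complex.sel)
    finally show "norm (G y - G x) \<le> 1 / m * norm (v y t \<zeta> - v x t \<zeta>)" by simp
  qed
  have der: "AE r in lborel. r \<in> {s..t} \<longrightarrow>
      (\<exists>D. (G has_real_derivative D) (at r within {s..t}) \<and> D \<le> \<bar>d r\<bar>)"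
    using V(4)
  proof (rule AE_mp, intro AE_I2 impI)
    fix r assume H: "r \<in> {0..t} \<longrightarrow>
       ((\<lambda>r. v r t \<zeta>) has_vector_derivative herglotz_phi q d \<pi> (v r t \<zeta>) r) (at r within {0..t})"
      and r: "r \<in> {s..t}"
    have r0t: "r \<in> {0..t}" using r st by auto
    let ?P = "herglotz_phi q d \<pi> (v r t \<zeta>) r"
    have "((\<lambda>r. v r t \<zeta>) has_vector_derivative ?P) (at r within {s..t})"
      by (rule has_vector_derivative_within_subset[OF H[rule_format, OF r0t]]) (use st in auto)
    then have du: "(u has_real_derivative Re ?P) (at r within {s..t})"
      unfolding u_def by (rule has_field_derivative_Re)
    have ur: "0 < u r" using upos[OF r0t] .
    have dG: "(G has_real_derivative (inverse (u r) * Re ?P)) (at r within {s..t})"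
      unfolding G_def by (rule DERIV_chain2[OF DERIV_ln[OF ur] du])
    have "Re ?P \<le> d r * u r"
      unfolding u_def by (rule phi_Re_le) (use V(2) r0t q_nonneg in \<open>auto simp: right_half_plane_def\<close>)
    then have "inverse (u r) * Re ?P \<le> inverse (u r) * (d r * u r)"
      using ur by (intro mult_left_mono) auto
    also have "\<dots> = d r" using ur by simp
    also have "\<dots> \<le> \<bar>d r\<bar>" by simp
    finally show "\<exists>D. (G has_real_derivative D) (at r within {s..t}) \<and> D \<le> \<bar>d r\<bar>"
      using dG by blast
  qed
  have dint0: "(\<lambda>r. \<bar>d r\<bar>) integrable_on {0..t}"
    using set_borel_integral_eq_integral(1)[OF set_integrable_abs[OF d_loc[rule_format, OF t0]]] .
  have dint: "(\<lambda>r. \<bar>d r\<bar>) integrable_on {s..t}"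
    by (rule integrable_on_subinterval[OF dint0]) (use st in auto)
  have "G t - G s \<le> integral {s..t} (\<lambda>r. \<bar>d r\<bar>)"
    by (rule ac_deriv_le_integral[OF st(2) acG der dint]) simp
  also have "\<dots> \<le> integral {0..t} (\<lambda>r. \<bar>d r\<bar>)"
    by (rule integral_subset_le[OF _ dint dint0]) (use st in auto)
  finally have Gle: "G t - G s \<le> integral {0..t} (\<lambda>r. \<bar>d r\<bar>)" .
  have Gt: "G t = ln \<theta>" using V(1) unfolding G_def u_def \<zeta>_def by simp
  have us: "0 < u s" using upos st by auto
  have "ln \<theta> - integral {0..t} (\<lambda>r. \<bar>d r\<bar>) \<le> ln (u s)" using Gle Gt unfolding G_def by linarith
  then have "exp (ln \<theta> - integral {0..t} (\<lambda>r. \<bar>d r\<bar>)) \<le> exp (ln (u s))" by simp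
  then have "\<theta> * exp (- integral {0..t} (\<lambda>r. \<bar>d r\<bar>)) \<le> u s"
    using us \<theta> by (simp add: exp_diff exp_minus divide_inverse mult.commute)
  then show ?thesis unfolding u_def \<zeta>_def .
qed




lemma kernel_zero:
  fixes v :: "real \<Rightarrow> real \<Rightarrow> complex \<Rightarrow> complex"
    and k :: "real \<Rightarrow> real \<Rightarrow> ennreal \<Rightarrow> ennreal measure"
  assumes kernels: "branching_kernels v k" and st: "0 \<le> s" "s \<le> t"
    and x: "0 < x"
    and vlow: "\<And>\<theta>. \<theta> > 0 \<Longrightarrow> \<theta> * c \<le> Re (v s t (complex_of_real \<theta>))" and c: "c > 0"
  shows "measure (k s t x) {0} = 0"
proof -
  have K: "prob_space (k s t x)" "sets (k s t x) = sets borel" "k s t \<infinity> = return borel \<infinity>"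
    "\<And>\<theta>::real. 0 < x \<Longrightarrow> x < \<infinity> \<Longrightarrow> \<theta> > 0 \<Longrightarrow>
           complex_of_real (set_lebesgue_integral (k s t x) {y. y \<noteq> \<infinity>} (\<lambda>y. exp (- \<theta> * enn2real y)))
           = exp (- complex_of_real (enn2real x) * v s t (complex_of_real \<theta>))"
    using kernels st unfolding branching_kernels_def by blast+
  show ?thesis
  proof (cases "x = \<infinity>")
    case True
    then show ?thesis using K(3) by (simp add: measure_return)
  next
    case False
    then have xfin: "x < \<infinity>" by (simp add: less_top)
    define x' where "x' = enn2real x"
    have x'pos: "x' > 0" using x xfin unfolding x'_def by (simp add: enn2real_positive_iff less_top)
    interpret K: prob_space "k s t x" by (rule K(1))
    define m where "m = measure (k s t x) {0}"
    have bound: "m \<le> exp (- x' * (\<theta> * c))" if \<theta>: "\<theta> > 0" for \<theta>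
    proof -
      define f where "f y = indicator {y. y \<noteq> \<infinity>} y *\<^sub>R exp (- \<theta> * enn2real y)" for y :: ennreal
      have fmeas: "f \<in> borel_measurable (k s t x)"
        unfolding f_def measurable_cong_sets[OF K(2) refl] by measurable
      have fint: "integrable (k s t x) f"
      proof (rule K.integrable_const_bound[where B=1])
        show "AE y in k s t x. norm (f y) \<le> 1"
          using \<theta> by (intro AE_I2) (auto simp: f_def indicator_def enn2real_nonneg)
      qed (rule fmeas)
      have s0: "{0} \<in> sets (k s t x)" using K(2) by simp
      have "m = (LINT y|k s t x. indicator {0} y)"
        unfolding m_def using s0 by (simp add: K.emeasure_eq_measure)
      also have "\<dots> \<le> (LINT y|k s t x. f y)"
      proof (rule integral_mono)
        show "integrable (k s t x) (indicator {0} :: ennreal \<Rightarrow> real)"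
          using s0 by (simp add: K.emeasure_eq_measure)
        show "integrable (k s t x) f" by (rule fint)
        fix y show "indicator {0} y \<le> f y"
          by (cases "y = 0") (auto simp: f_def indicator_def)
      qed
      also have "\<dots> = set_lebesgue_integral (k s t x) {y. y \<noteq> \<infinity>} (\<lambda>y. exp (- \<theta> * enn2real y))"
        unfolding f_def set_lebesgue_integral_def ..
      also have "\<dots> \<le> cmod (complex_of_real (set_lebesgue_integral (k s t x) {y. y \<noteq> \<infinity>} (\<lambda>y. exp (- \<theta> * enn2real y))))"
        by simp
      also have "\<dots> = cmod (exp (- complex_of_real x' * v s t (complex_of_real \<theta>)))"
        using K(4)[OF x xfin \<theta>] unfolding x'_def by simp
      also have "\<dots> = exp (- x' * Re (v s t (complex_of_real \<theta>)))"
        by (simp add: norm_exp_eq_Re)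
      also have "\<dots> \<le> exp (- x' * (\<theta> * c))"
        using vlow[OF \<theta>] x'pos by simp
      finally show ?thesis .
    qed
    show ?thesis
    proof (rule ccontr)
      assume "\<not> ?thesis"
      then have mpos: "m > 0" unfolding m_def using measure_nonneg[of "k s t x" "{0}"] by linarith
      define \<theta> where "\<theta> = (\<bar>ln m\<bar> + 1) / (x' * c)"
      have \<theta>: "\<theta> > 0" unfolding \<theta>_def using x'pos c by (simp add: add_pos_nonneg)
      have "x' * (\<theta> * c) = \<bar>ln m\<bar> + 1" unfolding \<theta>_def using x'pos c by (simp add: field_simps)
      then have "exp (- x' * (\<theta> * c)) = exp (- (\<bar>ln m\<bar> + 1))" by simp
      also have "\<dots> < exp (ln m)" by simp
      also have "\<dots> = m" using mpos by simp
      finally show False using bound[OF \<theta>] by linarith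
    qed
  qed
qed



theorem mainTheorem15:
  fixes q d :: "real \<Rightarrow> real"
    and \<pi> :: "real \<Rightarrow> real measure"
    and v :: "real \<Rightarrow> real \<Rightarrow> complex \<Rightarrow> complex"
    and k :: "real \<Rightarrow> real \<Rightarrow> ennreal \<Rightarrow> ennreal measure"
    and P :: "real \<Rightarrow> ennreal \<Rightarrow> 'w measure"
    and Z :: "real \<Rightarrow> 'w \<Rightarrow> ennreal"
  assumes q_nonneg: "\<forall>t\<ge>0. q t \<ge> 0"
    and q_loc: "\<forall>T\<ge>0. set_integrable lborel {0..T} q"
    and d_loc: "\<forall>T\<ge>0. set_integrable lborel {0..T} d"
    and \<pi>_borel: "\<forall>t\<ge>0. sets (\<pi> t) = sets borel"
    and \<pi>_pos: "\<forall>t\<ge>0. emeasure (\<pi> t) {..0} = 0"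
    and \<pi>_loc: "loc_integrable_family (\<lambda>t. density (\<pi> t) (\<lambda>x. ennreal (min x 1)))"
    and v_ev: "reverse_evolution_family (herglotz_phi q d \<pi>) v"
    and kernels: "branching_kernels v k"
    and process: "branching_process k P Z"
    and s_nonneg: "0 \<le> s"
    and x_pos: "0 < x"
  shows "{w \<in> space (P s x). hit_zero Z s w < \<infinity>} \<in> sets (P s x) \<and>
         measure (P s x) {w \<in> space (P s x). hit_zero Z s w < \<infinity>} = 0"
proof -
  have kz: "measure (k s t x) {0} = 0" if st: "s \<le> t" for t
  proof (rule kernel_zero[OF kernels s_nonneg st x_pos])
    show "0 < exp (- integral {0..t} (\<lambda>r. \<bar>d r\<bar>))" by simp
    show "\<theta> * exp (- integral {0..t} (\<lambda>r. \<bar>d r\<bar>)) \<le> Re (v s t (complex_of_real \<theta>))" if "\<theta> > 0" for \<theta>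
      by (rule v_lower[OF q_nonneg d_loc v_ev s_nonneg st that])
  qed
  define M where "M = P s x"
  have PM: "prob_space M" "\<And>t. Z t \<in> borel_measurable M"
    "\<And>w. w \<in> space M \<Longrightarrow> cadlag_absorbed (\<lambda>t. Z t w)"
    "emeasure M {w \<in> space M. Z s w = x} = 1"
    "\<And>r t B A. s \<le> r \<Longrightarrow> r \<le> t \<Longrightarrow> B \<in> sets borel \<Longrightarrow>
       A \<in> sigma_sets (space M) (\<Union>u\<in>{s..r}. {Z u -` C \<inter> space M | C. C \<in> sets borel}) \<Longrightarrow>
       measure M (A \<inter> {w \<in> space M. Z t w \<in> B})
         = set_lebesgue_integral M A (\<lambda>w. measure (k r t (Z r w)) B)"
    using process s_nonneg unfolding branching_process_def M_def by blast+
  interpret M: prob_space M by (rule PM(1))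
  have Zs: "{w \<in> space M. Z t w = a} \<in> sets M" for t a
  proof -
    have "Z t -` {a} \<inter> space M \<in> sets M" by (rule measurable_sets[OF PM(2)]) simp
    moreover have "Z t -` {a} \<inter> space M = {w \<in> space M. Z t w = a}" by auto
    ultimately show ?thesis by simp
  qed
  have AEx: "AE w in M. Z s w = x"
  proof -
    have "measure M {w \<in> space M. Z s w = x} = 1"
      using PM(4) by (simp add: M.emeasure_eq_measure)
    then have "AE w in M. w \<in> {w \<in> space M. Z s w = x}"
      by (rule M.AE_prob_1)
    then show ?thesis by auto
  qed
  have null: "measure M {w \<in> space M. Z t w = 0} = 0" if st: "s \<le> t" for t
  proof -
    have "measure M (space M \<inter> {w \<in> space M. Z t w \<in> {0}})
        = set_lebesgue_integral M (space M) (\<lambda>w. measure (k s t (Z s w)) {0})"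
      by (rule PM(5)[OF order_refl st]) (auto intro: sigma_sets_top)
    also have "\<dots> = 0"
      unfolding set_lebesgue_integral_def
    proof (rule integral_eq_zero_AE)
      show "AE w in M. indicator (space M) w *\<^sub>R measure (k s t (Z s w)) {0} = 0"
        using AEx by eventually_elim (simp add: kz[OF st])
    qed
    finally have e0: "measure M (space M \<inter> {w \<in> space M. Z t w \<in> {0}}) = 0" .
    have "space M \<inter> {w \<in> space M. Z t w \<in> {0}} = {w \<in> space M. Z t w = 0}" by auto
    then show ?thesis using e0 by simp
  qed
  have hz: "hit_zero Z s w < \<infinity> \<longleftrightarrow> (\<exists>n::nat. Z (s + real n) w = 0)" if w: "w \<in> space M" for w
  proof
    assume "hit_zero Z s w < \<infinity>"
    then have "{t. s \<le> t \<and> Z t w = 0} \<noteq> {}"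
      unfolding hit_zero_def by (metis Inf_empty image_empty less_irrefl top_ereal_def)
    then obtain t0 where t0: "s \<le> t0" "Z t0 w = 0" by blast
    have ca: "\<forall>t\<ge>0. \<forall>a\<in>{0, \<infinity>}. (Z t w = a \<or> (t > 0 \<and> ((\<lambda>t. Z t w) \<longlongrightarrow> a) (at_left t)))
            \<longrightarrow> (\<forall>u\<ge>t. Z u w = a)"
      using PM(3)[OF w] unfolding cadlag_absorbed_def by blast
    have all: "\<forall>u\<ge>t0. Z u w = 0"
      using ca t0 s_nonneg by (metis insertI1 order_trans)
    define n where "n = nat \<lceil>t0 - s\<rceil>"
    have "t0 \<le> s + real n" unfolding n_def by linarith
    then show "\<exists>n::nat. Z (s + real n) w = 0" using all by blast
  next
    assume "\<exists>n::nat. Z (s + real n) w = 0"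
    then obtain n :: nat where n: "Z (s + real n) w = 0" by blast
    have mem: "ereal (s + real n) \<in> ereal ` {t. s \<le> t \<and> Z t w = 0}" using n by simp
    have "hit_zero Z s w \<le> ereal (s + real n)"
      unfolding hit_zero_def by (rule Inf_lower[OF mem])
    then show "hit_zero Z s w < \<infinity>" by (rule order_le_less_trans) simp
  qed
  have seteq: "{w \<in> space M. hit_zero Z s w < \<infinity>} = (\<Union>n::nat. {w \<in> space M. Z (s + real n) w = 0})"
    using hz by blast
  have meas: "(\<Union>n::nat. {w \<in> space M. Z (s + real n) w = 0}) \<in> sets M"
    using Zs by blast
  have "emeasure M (\<Union>n::nat. {w \<in> space M. Z (s + real n) w = 0}) = 0"
  proof (rule emeasure_UN_eq_0)
    show "emeasure M {w \<in> space M. Z (s + real n) w = 0} = 0" for n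
      using null[of "s + real n"] Zs by (simp add: M.emeasure_eq_measure)
  qed (use Zs in auto)
  then have "measure M (\<Union>n::nat. {w \<in> space M. Z (s + real n) w = 0}) = 0"
    by (simp add: measure_def)
  then show ?thesis using seteq meas unfolding M_def by simp
qed

end
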